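(* Let $\mathcal X=(\Omega,S)$ be a coherent configuration and let $s$ be a relation of $\mathcal X$ which is connected. Suppose that for every point $\alpha\in\Omega$ the coherent configuration $(\mathcal X_\alpha)_{\alpha s}$ is semiregular. Then for every $(\alpha,\beta)\in s$ with $\alpha\ne\beta$ the set $\{\alpha,\beta\}$ is a base of $\mathcal X$. In particular $b(\mathcal X)\le 2$.
   Context: A coherent configuration on a finite set $\Omega$ is a pair $\mathcal X=(\Omega,S)$ where $S$ is a partition of $\Omega\times\Omega$ such that $1_\Omega$ is a union of elements of $S$, $s^*=\{(\beta,\alpha):(\alpha,\beta)\in s\}\in S$ for $s\in S$, and for $r,s,t\in S$ the number $|\{\gamma:(\alpha,\gamma)\in r,(\gamma,\beta)\in s\}|$ is independent of $(\alpha,\beta)\in t$. Relations are unions of elements of $S$; fibers are sets $\Gamma$ with $1_\Gamma\in S$. A relation $s$ is connected if it is symmetric ($s=s^*$) and any two distinct points of $\Omega$ are joined by a path in the graph $(\Omega,s)$. For $\gamma\in\Omega$, $\gamma s=\{\delta:(\gamma,\delta)\in s\}$. A fission of $\mathcal X$ is a coherent configuration on $\Omega$ whose relations include those of $\mathcal X$; complete means every basic relation is a singleton. $\mathcal X_\alpha$ is the smallest fission of $\mathcal X$ in which $\{\alpha\}$ is a fiber; $\alpha s$ is a union of fibers of $\mathcal X_\alpha$. For a union $\Gamma$ of fibers the restriction is $\mathcal X_\Gamma=(\Gamma,\{r\cap\Gamma^2:r\in S\}\setminus\{\emptyset\})$. A coherent configuration $(\Gamma,T)$ is semiregular if $|\{\delta:(\gamma,\delta)\in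 t\}|\le 1$ for all $\gamma\in\Gamma$, $t\in T$. A set $B$ is a base of $\mathcal X$ if the smallest fission in which all $\{\beta\}$, $\beta\in B$, are fibers is complete; $b(\mathcal X)$ is the minimal size of a base. *)

theory Defs
  imports Main
begin

definition coherent_configuration :: "'a set \<Rightarrow> ('a \<times> 'a) set set \<Rightarrow> bool" where
  "coherent_configuration \<Omega> S \<longleftrightarrow>
     finite \<Omega> \<and>
     {} \<notin> S \<and> \<Union>S = \<Omega> \<times> \<Omega> \<and>
     (\<forall>r\<in>S. \<forall>s\<in>S. r \<noteq> s \<longrightarrow> r \<inter> s = {}) \<and>
     (\<exists>D\<subseteq>S. Id_on \<Omega> = \<Union>D) \<and>
     (\<forall>s\<in>S. converse s \<in> S) \<and>
     (\<forall>r\<in>S. \<forall>s\<in>S. \<forall>t\<in>S. \<forall>a b a' b'. (a, b) \<in> t \<longrightarrow> (a', b') \<in> t \<longrightarrow>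
        card {c. (a, c) \<in> r \<and> (c, b) \<in> s} = card {c. (a', c) \<in> r \<and> (c, b') \<in> s})"

definition is_relation :: "('a \<times> 'a) set set \<Rightarrow> ('a \<times> 'a) set \<Rightarrow> bool" where
  "is_relation S s \<longleftrightarrow> (\<exists>T\<subseteq>S. s = \<Union>T)"

definition connected_rel :: "'a set \<Rightarrow> ('a \<times> 'a) set \<Rightarrow> bool" where
  "connected_rel \<Omega> s \<longleftrightarrow> s = converse s \<and>
     (\<forall>x\<in>\<Omega>. \<forall>y\<in>\<Omega>. x \<noteq> y \<longrightarrow> (x, y) \<in> s\<^sup>+)"

definition neighbourhood :: "'a \<Rightarrow> ('a \<times> 'a) set \<Rightarrow> 'a set" where
  "neighbourhood x s = {y. (x, y) \<in> s}"

definition fission :: "'a set \<Rightarrow> ('a \<times> 'a) set set \<Rightarrow> ('a \<times> 'a) set set \<Rightarrow> bool" where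
  "fission \<Omega> S T \<longleftrightarrow> coherent_configuration \<Omega> T \<and> (\<forall>s\<in>S. is_relation T s)"

(* T is the smallest fission of (\<Omega>, S) in which every {b}, b \<in> B, is a fiber *)
definition smallest_point_fission ::
    "'a set \<Rightarrow> ('a \<times> 'a) set set \<Rightarrow> 'a set \<Rightarrow> ('a \<times> 'a) set set \<Rightarrow> bool" where
  "smallest_point_fission \<Omega> S B T \<longleftrightarrow>
     fission \<Omega> S T \<and> (\<forall>b\<in>B. Id_on {b} \<in> T) \<and>
     (\<forall>T'. fission \<Omega> S T' \<and> (\<forall>b\<in>B. Id_on {b} \<in> T') \<longrightarrow> (\<forall>t\<in>T. is_relation T' t))"

definition complete_cc :: "('a \<times> 'a) set set \<Rightarrow> bool" where
  "complete_cc T \<longleftrightarrow> (\<forall>t\<in>T. \<exists>p. t = {p})"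

definition restriction :: "('a \<times> 'a) set set \<Rightarrow> 'a set \<Rightarrow> ('a \<times> 'a) set set" where
  "restriction T \<Gamma> = {r \<inter> (\<Gamma> \<times> \<Gamma>) | r. r \<in> T} - {{}}"

definition semiregular :: "'a set \<Rightarrow> ('a \<times> 'a) set set \<Rightarrow> bool" where
  "semiregular \<Gamma> T \<longleftrightarrow> (\<forall>g\<in>\<Gamma>. \<forall>t\<in>T. card {d. (g, d) \<in> t} \<le> 1)"

definition is_base :: "'a set \<Rightarrow> ('a \<times> 'a) set set \<Rightarrow> 'a set \<Rightarrow> bool" where
  "is_base \<Omega> S B \<longleftrightarrow> B \<subseteq> \<Omega> \<and> (\<exists>T. smallest_point_fission \<Omega> S B T \<and> complete_cc T)"

definition base_number :: "'a set \<Rightarrow> ('a \<times> 'a) set set \<Rightarrow> nat" where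
  "base_number \<Omega> S = (LEAST n. \<exists>B. is_base \<Omega> S B \<and> card B = n)"

end

theory Submission
  imports Defs
begin


definition rels :: "('a \<times> 'a) set set \<Rightarrow> ('a \<times> 'a) set set" where
  "rels T = {\<Union>U | U. U \<subseteq> T}"

lemma is_relation_rels: "is_relation T s \<longleftrightarrow> s \<in> rels T"
  unfolding is_relation_def rels_def by auto

definition compk :: "'a set \<Rightarrow> ('a \<times> 'a) set \<Rightarrow> ('a \<times> 'a) set \<Rightarrow> nat \<Rightarrow> ('a \<times> 'a) set" where
  "compk \<Omega> r s k = {p \<in> \<Omega> \<times> \<Omega>. card {z. (fst p, z) \<in> r \<and> (z, snd p) \<in> s} = k}"

definition cclosed :: "'a set \<Rightarrow> ('a \<times> 'a) set set \<Rightarrow> bool" where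
  "cclosed \<Omega> R \<longleftrightarrow> R \<subseteq> Pow (\<Omega> \<times> \<Omega>) \<and> {} \<in> R \<and> \<Omega> \<times> \<Omega> \<in> R \<and> Id_on \<Omega> \<in> R \<and>
     (\<forall>r\<in>R. \<forall>s\<in>R. r \<union> s \<in> R \<and> r \<inter> s \<in> R \<and> r - s \<in> R \<and> (\<forall>k. compk \<Omega> r s k \<in> R)) \<and>
     (\<forall>r\<in>R. converse r \<in> R)"

lemma rels_I: "U \<subseteq> T \<Longrightarrow> \<Union>U \<in> rels T"
  unfolding rels_def by blast

lemma rels_E: "r \<in> rels T \<Longrightarrow> (\<And>U. U \<subseteq> T \<Longrightarrow> r = \<Union>U \<Longrightarrow> P) \<Longrightarrow> P"
  unfolding rels_def by blast

lemma cc_props: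
  assumes "coherent_configuration \<Omega> T"
  shows "finite \<Omega>" "{} \<notin> T" "\<Union>T = \<Omega> \<times> \<Omega>"
    "\<And>r s. r \<in> T \<Longrightarrow> s \<in> T \<Longrightarrow> r \<noteq> s \<Longrightarrow> r \<inter> s = {}"
    "\<exists>D\<subseteq>T. Id_on \<Omega> = \<Union>D" "\<And>s. s \<in> T \<Longrightarrow> converse s \<in> T"
    "\<And>r s t a b a' b'. r \<in> T \<Longrightarrow> s \<in> T \<Longrightarrow> t \<in> T \<Longrightarrow> (a, b) \<in> t \<Longrightarrow> (a', b') \<in> t \<Longrightarrow>
        card {c. (a, c) \<in> r \<and> (c, b) \<in> s} = card {c. (a', c) \<in> r \<and> (c, b') \<in> s}"
  using assms unfolding coherent_configuration_def by meson+

lemma cc_sub: "coherent_configuration \<Omega> T \<Longrightarrow> t \<in> T \<Longrightarrow> t \<subseteq> \<Omega> \<times> \<Omega>"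
  using cc_props(3) by blast

lemma cc_uniq: "coherent_configuration \<Omega> T \<Longrightarrow> t1 \<in> T \<Longrightarrow> t2 \<in> T \<Longrightarrow> p \<in> t1 \<Longrightarrow> p \<in> t2 \<Longrightarrow> t1 = t2"
  using cc_props(4)[of \<Omega> T t1 t2] by blast

lemma cc_finite: "coherent_configuration \<Omega> T \<Longrightarrow> finite T"
proof -
  assume a: "coherent_configuration \<Omega> T"
  have "T \<subseteq> Pow (\<Omega> \<times> \<Omega>)" using cc_sub[OF a] by blast
  then show ?thesis using cc_props(1)[OF a] finite_subset by blast
qed

lemma cc_count_const:
  assumes cc: "coherent_configuration \<Omega> T" and U: "U \<subseteq> T" and V: "V \<subseteq> T"
    and t: "t \<in> T" and p: "(x, y) \<in> t" and q: "(x', y') \<in> t"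
  shows "card {z. (x, z) \<in> \<Union>U \<and> (z, y) \<in> \<Union>V} = card {z. (x', z) \<in> \<Union>U \<and> (z, y') \<in> \<Union>V}"
proof -
  have "finite U" "finite V" using finite_subset[OF U cc_finite[OF cc]] finite_subset[OF V cc_finite[OF cc]] by auto
  then have fin: "finite (U \<times> V)" by simp
  have gen: "card {z. (a, z) \<in> \<Union>U \<and> (z, b) \<in> \<Union>V} =
     (\<Sum>uv\<in>U \<times> V. card {z. (a, z) \<in> fst uv \<and> (z, b) \<in> snd uv})" for a b
  proof -
    have eq: "{z. (a, z) \<in> \<Union>U \<and> (z, b) \<in> \<Union>V} = (\<Union>uv\<in>U \<times> V. {z. (a, z) \<in> fst uv \<and> (z, b) \<in> snd uv})"
      by auto
    have "card (\<Union>uv\<in>U \<times> V. {z. (a, z) \<in> fst uv \<and> (z, b) \<in> snd uv}) =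
       (\<Sum>uv\<in>U \<times> V. card {z. (a, z) \<in> fst uv \<and> (z, b) \<in> snd uv})"
    proof (rule card_UN_disjoint[OF fin])
      show "\<forall>i\<in>U \<times> V. finite {z. (a, z) \<in> fst i \<and> (z, b) \<in> snd i}"
      proof
        fix i assume "i \<in> U \<times> V"
        then have "fst i \<in> T" using U by auto
        then have sb: "{z. (a, z) \<in> fst i \<and> (z, b) \<in> snd i} \<subseteq> \<Omega>" using cc_sub[OF cc] by blast
        show "finite {z. (a, z) \<in> fst i \<and> (z, b) \<in> snd i}"
          using finite_subset[OF sb cc_props(1)[OF cc]] .
      qed
      show "\<forall>i\<in>U \<times> V. \<forall>j\<in>U \<times> V. i \<noteq> j \<longrightarrow>
         {z. (a, z) \<in> fst i \<and> (z, b) \<in> snd i} \<inter> {z. (a, z) \<in> fst j \<and> (z, b) \<in> snd j} = {}"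
      proof (intro ballI impI)
        fix i j assume i: "i \<in> U \<times> V" and j: "j \<in> U \<times> V" and ne: "i \<noteq> j"
        show "{z. (a, z) \<in> fst i \<and> (z, b) \<in> snd i} \<inter> {z. (a, z) \<in> fst j \<and> (z, b) \<in> snd j} = {}"
        proof (rule ccontr)
          assume "\<not> ?thesis"
          then obtain z where z: "(a, z) \<in> fst i" "(z, b) \<in> snd i" "(a, z) \<in> fst j" "(z, b) \<in> snd j" by blast
          have m: "fst i \<in> T" "fst j \<in> T" "snd i \<in> T" "snd j \<in> T" using i j U V by auto
          have "fst i = fst j" using cc_uniq[OF cc m(1) m(2) z(1) z(3)] .
          moreover have "snd i = snd j" using cc_uniq[OF cc m(3) m(4) z(2) z(4)] .
          ultimately show False using ne prod_eq_iff by metis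
        qed
      qed
    qed
    then show ?thesis using eq by simp
  qed
  have "(\<Sum>uv\<in>U \<times> V. card {z. (x, z) \<in> fst uv \<and> (z, y) \<in> snd uv}) =
        (\<Sum>uv\<in>U \<times> V. card {z. (x', z) \<in> fst uv \<and> (z, y') \<in> snd uv})"
  proof (rule sum.cong[OF refl])
    fix uv assume "uv \<in> U \<times> V"
    then have a1: "fst uv \<in> T" and a2: "snd uv \<in> T" using U V by auto
    show "card {z. (x, z) \<in> fst uv \<and> (z, y) \<in> snd uv} = card {z. (x', z) \<in> fst uv \<and> (z, y') \<in> snd uv}"
      using cc_props(7)[OF cc a1 a2 t p q] .
  qed
  then show ?thesis using gen by simp
qed

lemma cc_rels_cclosed:
  assumes cc: "coherent_configuration \<Omega> T"
  shows "cclosed \<Omega> (rels T)"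
proof -
  note uq = cc_uniq[OF cc]
  have sub: "rels T \<subseteq> Pow (\<Omega> \<times> \<Omega>)" unfolding rels_def using cc_props(3)[OF cc] by blast
  have e: "{} \<in> rels T" using rels_I[of "{}" T] by simp
  have o: "\<Omega> \<times> \<Omega> \<in> rels T" using rels_I[of T T] cc_props(3)[OF cc] by simp
  have i: "Id_on \<Omega> \<in> rels T" using rels_I cc_props(5)[OF cc] by metis
  have ops: "r \<union> s \<in> rels T \<and> r \<inter> s \<in> rels T \<and> r - s \<in> rels T \<and> (\<forall>k. compk \<Omega> r s k \<in> rels T)"
    if r: "r \<in> rels T" and s: "s \<in> rels T" for r s
  proof -
    obtain U where U: "U \<subseteq> T" "r = \<Union>U" using r by (rule rels_E) blast
    obtain V where V: "V \<subseteq> T" "s = \<Union>V" using s by (rule rels_E) blast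
    have 1: "r \<union> s = \<Union>(U \<union> V)" using U V by auto
    have 2: "r \<inter> s = \<Union>(U \<inter> V)"
    proof
      show "r \<inter> s \<subseteq> \<Union>(U \<inter> V)"
      proof
        fix p assume "p \<in> r \<inter> s"
        then obtain u v where "u \<in> U" "v \<in> V" "p \<in> u" "p \<in> v" using U V by blast
        moreover have "u = v" using uq[of u v p] calculation U V by blast
        ultimately show "p \<in> \<Union>(U \<inter> V)" by blast
      qed
    qed (use U V in blast)
    have 3: "r - s = \<Union>(U - V)"
    proof
      show "\<Union>(U - V) \<subseteq> r - s"
      proof
        fix p assume "p \<in> \<Union>(U - V)"
        then obtain u where u: "u \<in> U" "u \<notin> V" "p \<in> u" by blast
        have "p \<notin> s"
        proof
          assume "p \<in> s"
          then obtain v where "v \<in> V" "p \<in> v" using V by blast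
          then have "u = v" using uq[of u v p] u U V by blast
          then show False using u \<open>v \<in> V\<close> by blast
        qed
        then show "p \<in> r - s" using u U by blast
      qed
    qed (use U V in blast)
    have 4: "compk \<Omega> r s k = \<Union>{t\<in>T. t \<subseteq> compk \<Omega> r s k}" for k
    proof
      show "compk \<Omega> r s k \<subseteq> \<Union>{t\<in>T. t \<subseteq> compk \<Omega> r s k}"
      proof
        fix p assume p: "p \<in> compk \<Omega> r s k"
        obtain x y where xy: "p = (x, y)" by (cases p)
        have "p \<in> \<Omega> \<times> \<Omega>" using p unfolding compk_def by blast
        then obtain t where t: "t \<in> T" "p \<in> t" using cc_props(3)[OF cc] by blast
        have "t \<subseteq> compk \<Omega> r s k"
        proof
          fix q assume q: "q \<in> t"
          obtain x' y' where xy': "q = (x', y')" by (cases q)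
          have "q \<in> \<Omega> \<times> \<Omega>" using cc_sub[OF cc t(1)] q by blast
          moreover have "card {z. (x', z) \<in> r \<and> (z, y') \<in> s} = k"
            using cc_count_const[OF cc U(1) V(1) t(1), of x y x' y'] t q xy xy' p U(2) V(2)
            unfolding compk_def by simp
          ultimately show "q \<in> compk \<Omega> r s k" unfolding compk_def xy' by simp
        qed
        then show "p \<in> \<Union>{t\<in>T. t \<subseteq> compk \<Omega> r s k}" using t by blast
      qed
    qed blast
    have "U \<union> V \<subseteq> T" "U \<inter> V \<subseteq> T" "U - V \<subseteq> T" "{t\<in>T. t \<subseteq> compk \<Omega> r s k} \<subseteq> T" for k
      using U V by auto
    then show ?thesis using 1 2 3 4 rels_I by metis
  qed
  have conv: "converse r \<in> rels T" if r: "r \<in> rels T" for r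
  proof -
    obtain U where U: "U \<subseteq> T" "r = \<Union>U" using r by (rule rels_E) blast
    have "converse r = \<Union>(converse ` U)" using U by auto
    moreover have "converse ` U \<subseteq> T" using U cc_props(6)[OF cc] by blast
    ultimately show ?thesis using rels_I by metis
  qed
  show ?thesis unfolding cclosed_def
  proof (intro conjI ballI allI)
    fix r s k assume "r \<in> rels T" "s \<in> rels T"
    note o = ops[OF this]
    show "r \<union> s \<in> rels T" using o by simp
    show "r \<inter> s \<in> rels T" using o by simp
    show "r - s \<in> rels T" using o by simp
    show "compk \<Omega> r s k \<in> rels T" using o by simp
  qed (use sub e o i conv in auto)
qed


lemma cclosed_props:
  assumes "cclosed \<Omega> R"
  shows "R \<subseteq> Pow (\<Omega> \<times> \<Omega>)" "{} \<in> R" "\<Omega> \<times> \<Omega> \<in> R" "Id_on \<Omega> \<in> R"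
    "\<And>r s. r \<in> R \<Longrightarrow> s \<in> R \<Longrightarrow> r \<union> s \<in> R"
    "\<And>r s. r \<in> R \<Longrightarrow> s \<in> R \<Longrightarrow> r \<inter> s \<in> R"
    "\<And>r s. r \<in> R \<Longrightarrow> s \<in> R \<Longrightarrow> r - s \<in> R"
    "\<And>r s k. r \<in> R \<Longrightarrow> s \<in> R \<Longrightarrow> compk \<Omega> r s k \<in> R"
    "\<And>r. r \<in> R \<Longrightarrow> converse r \<in> R"
  using assms unfolding cclosed_def by meson+

lemma cclosed_Inter_mem:
  assumes c: "cclosed \<Omega> R" and F: "finite F" "F \<noteq> {}" "F \<subseteq> R"
  shows "\<Inter>F \<in> R"
  using F
proof (induction F rule: finite_ne_induct)
  case (singleton x) then show ?case by simp
next
  case (insert x F)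
  then have "x \<in> R" "\<Inter>F \<in> R" by auto
  then show ?case using cclosed_props(6)[OF c] by simp
qed

definition atom :: "('a \<times> 'a) set set \<Rightarrow> 'a \<times> 'a \<Rightarrow> ('a \<times> 'a) set" where
  "atom R p = \<Inter>{r\<in>R. p \<in> r}"

lemma cclosed_finite: "cclosed \<Omega> R \<Longrightarrow> finite \<Omega> \<Longrightarrow> finite R"
proof -
  assume c: "cclosed \<Omega> R" and f: "finite \<Omega>"
  have "finite (Pow (\<Omega> \<times> \<Omega>))" using f by simp
  then show "finite R" using finite_subset[OF cclosed_props(1)[OF c]] by simp
qed

context
  fixes \<Omega> :: "'a set" and R
  assumes c: "cclosed \<Omega> R" and f: "finite \<Omega>"
begin

lemma atom_mem: "p \<in> \<Omega> \<times> \<Omega> \<Longrightarrow> atom R p \<in> R"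
proof -
  assume p: "p \<in> \<Omega> \<times> \<Omega>"
  have "{r\<in>R. p \<in> r} \<noteq> {}" using p cclosed_props(3)[OF c] by blast
  moreover have "finite {r\<in>R. p \<in> r}" using cclosed_finite[OF c f] by simp
  ultimately show ?thesis unfolding atom_def using cclosed_Inter_mem[OF c] by blast
qed

lemma atom_in: "p \<in> \<Omega> \<times> \<Omega> \<Longrightarrow> p \<in> atom R p"
  unfolding atom_def by blast

lemma atom_sub: "p \<in> r \<Longrightarrow> r \<in> R \<Longrightarrow> atom R p \<subseteq> r"
  unfolding atom_def by blast

lemma atom_subO: "p \<in> \<Omega> \<times> \<Omega> \<Longrightarrow> atom R p \<subseteq> \<Omega> \<times> \<Omega>"
  using atom_mem cclosed_props(1)[OF c] by blast

lemma atom_eq: "p \<in> \<Omega> \<times> \<Omega> \<Longrightarrow> q \<in> atom R p \<Longrightarrow> atom R q = atom R p"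
proof -
  assume p: "p \<in> \<Omega> \<times> \<Omega>" and q: "q \<in> atom R p"
  have qO: "q \<in> \<Omega> \<times> \<Omega>" using atom_subO[OF p] q by blast
  have 1: "atom R q \<subseteq> atom R p" using atom_sub[OF q atom_mem[OF p]] .
  have "p \<in> atom R q"
  proof (rule ccontr)
    assume n: "p \<notin> atom R q"
    have "atom R p - atom R q \<in> R" using cclosed_props(7)[OF c atom_mem[OF p] atom_mem[OF qO]] .
    moreover have "p \<in> atom R p - atom R q" using atom_in[OF p] n by blast
    ultimately have "atom R p \<subseteq> atom R p - atom R q" using atom_sub by blast
    then show False using q atom_in[OF qO] by blast
  qed
  then have "atom R p \<subseteq> atom R q" using atom_sub[OF _ atom_mem[OF qO]] by blast
  then show ?thesis using 1 by blast
qed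

lemma atoms_cc: "coherent_configuration \<Omega> (atom R ` (\<Omega> \<times> \<Omega>))"
proof -
  let ?T = "atom R ` (\<Omega> \<times> \<Omega>)"
  have 2: "{} \<notin> ?T" using atom_in by blast
  have 3: "\<Union>?T = \<Omega> \<times> \<Omega>" using atom_in atom_subO by blast
  have 4: "\<forall>r\<in>?T. \<forall>s\<in>?T. r \<noteq> s \<longrightarrow> r \<inter> s = {}"
  proof (intro ballI impI)
    fix r s assume r: "r \<in> ?T" and s: "s \<in> ?T" and ne: "r \<noteq> s"
    obtain p where p: "p \<in> \<Omega> \<times> \<Omega>" "r = atom R p" using r by blast
    obtain q where q: "q \<in> \<Omega> \<times> \<Omega>" "s = atom R q" using s by blast
    show "r \<inter> s = {}"
    proof (rule ccontr)
      assume "r \<inter> s \<noteq> {}"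
      then obtain w where w: "w \<in> atom R p" "w \<in> atom R q" using p q by blast
      have "atom R w = atom R p" using atom_eq[OF p(1) w(1)] .
      moreover have "atom R w = atom R q" using atom_eq[OF q(1) w(2)] .
      ultimately have "atom R p = atom R q" by simp
      then show False using ne p q by simp
    qed
  qed
  have 5: "\<exists>D\<subseteq>?T. Id_on \<Omega> = \<Union>D"
  proof
    have "atom R ` (Id_on \<Omega>) \<subseteq> ?T" by (auto simp: Id_on_def)
    moreover have "Id_on \<Omega> = \<Union>(atom R ` (Id_on \<Omega>))"
    proof
      show "Id_on \<Omega> \<subseteq> \<Union>(atom R ` (Id_on \<Omega>))" using atom_in by (auto simp: Id_on_def)
      show "\<Union>(atom R ` (Id_on \<Omega>)) \<subseteq> Id_on \<Omega>"
        using atom_sub[OF _ cclosed_props(4)[OF c]] by blast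
    qed
    ultimately show "atom R ` (Id_on \<Omega>) \<subseteq> ?T \<and> Id_on \<Omega> = \<Union>(atom R ` (Id_on \<Omega>))" by blast
  qed
  have 6: "\<forall>s\<in>?T. converse s \<in> ?T"
  proof
    fix r assume r: "r \<in> ?T"
    obtain x y where p: "(x, y) \<in> \<Omega> \<times> \<Omega>" "r = atom R (x, y)" using r by blast
    have yx: "(y, x) \<in> \<Omega> \<times> \<Omega>" using p by blast
    have a: "converse r \<in> R" using cclosed_props(9)[OF c] atom_mem[OF p(1)] p(2) by simp
    have b: "converse (atom R (y, x)) \<in> R" using cclosed_props(9)[OF c] atom_mem[OF yx] by simp
    have "atom R (y, x) \<subseteq> converse r" using atom_sub[OF _ a] atom_in[OF p(1)] p(2) by blast
    moreover have "atom R (x, y) \<subseteq> converse (atom R (y, x))" using atom_sub[OF _ b] atom_in[OF yx] by blast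
    ultimately have "converse r = atom R (y, x)" using p(2) by blast
    then show "converse r \<in> ?T" using yx by blast
  qed
  have 7: "\<forall>r\<in>?T. \<forall>s\<in>?T. \<forall>t\<in>?T. \<forall>a b a' b'. (a, b) \<in> t \<longrightarrow> (a', b') \<in> t \<longrightarrow>
        card {c. (a, c) \<in> r \<and> (c, b) \<in> s} = card {c. (a', c) \<in> r \<and> (c, b') \<in> s}"
  proof (intro ballI allI impI)
    fix r s t a b a' b'
    assume r: "r \<in> ?T" and s: "s \<in> ?T" and t: "t \<in> ?T" and ab: "(a, b) \<in> t" and ab': "(a', b') \<in> t"
    obtain p where p: "p \<in> \<Omega> \<times> \<Omega>" "t = atom R p" using t by blast
    have rR: "r \<in> R" using r atom_mem by blast
    have sR: "s \<in> R" using s atom_mem by blast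
    let ?k = "card {c. (a, c) \<in> r \<and> (c, b) \<in> s}"
    have abO: "(a, b) \<in> \<Omega> \<times> \<Omega>" using ab p atom_subO by blast
    have m: "(a, b) \<in> compk \<Omega> r s ?k" using abO unfolding compk_def by simp
    have "atom R (a, b) = t" using atom_eq[OF p(1)] ab p(2) by simp
    then have "t \<subseteq> compk \<Omega> r s ?k" using atom_sub[OF m cclosed_props(8)[OF c rR sR]] by simp
    then have "(a', b') \<in> compk \<Omega> r s ?k" using ab' by blast
    then show "?k = card {c. (a', c) \<in> r \<and> (c, b') \<in> s}" unfolding compk_def by simp
  qed
  show ?thesis unfolding coherent_configuration_def
    using f 2 3 4 5 6 7 by (intro conjI) assumption+
qed

lemma atoms_sub: "atom R ` (\<Omega> \<times> \<Omega>) \<subseteq> R"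
  using atom_mem by blast

lemma atoms_rels: "R \<subseteq> rels (atom R ` (\<Omega> \<times> \<Omega>))"
proof
  fix r assume r: "r \<in> R"
  have rO: "r \<subseteq> \<Omega> \<times> \<Omega>" using r cclosed_props(1)[OF c] by blast
  have "r = \<Union>(atom R ` r)"
  proof
    show "r \<subseteq> \<Union>(atom R ` r)" using atom_in rO by blast
    show "\<Union>(atom R ` r) \<subseteq> r" using atom_sub[OF _ r] by blast
  qed
  moreover have "atom R ` r \<subseteq> atom R ` (\<Omega> \<times> \<Omega>)" using rO by blast
  ultimately show "r \<in> rels (atom R ` (\<Omega> \<times> \<Omega>))" using rels_I by metis
qed

end



lemma cclosed_Pow: "cclosed \<Omega> (Pow (\<Omega> \<times> \<Omega>))"
  unfolding cclosed_def compk_def Id_on_def by auto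

lemma cclosed_Int:
  assumes "\<forall>R\<in>F. cclosed \<Omega> R"
  shows "cclosed \<Omega> (Pow (\<Omega> \<times> \<Omega>) \<inter> \<Inter>F)"
  using assms cclosed_Pow[of \<Omega>] unfolding cclosed_def by (simp add: Ball_def)

lemma rels_Union:
  assumes "\<forall>u\<in>U. u \<in> rels T"
  shows "\<Union>U \<in> rels T"
proof -
  have "\<Union>U = \<Union>{t\<in>T. \<exists>u\<in>U. t \<subseteq> u}"
  proof
    show "\<Union>U \<subseteq> \<Union>{t\<in>T. \<exists>u\<in>U. t \<subseteq> u}"
    proof
      fix p assume "p \<in> \<Union>U"
      then obtain u where u: "u \<in> U" "p \<in> u" by blast
      then obtain V where V: "V \<subseteq> T" "u = \<Union>V" using assms rels_E by metis
      then obtain t where t: "t \<in> V" "p \<in> t" using u by blast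
      have "t \<subseteq> u" using t V(2) by blast
      then have "t \<in> {t\<in>T. \<exists>u\<in>U. t \<subseteq> u}" using t V(1) u(1) by blast
      then show "p \<in> \<Union>{t\<in>T. \<exists>u\<in>U. t \<subseteq> u}" using t(2) by (rule UnionI)
    qed
    show "\<Union>{t\<in>T. \<exists>u\<in>U. t \<subseteq> u} \<subseteq> \<Union>U" by blast
  qed
  moreover have "{t\<in>T. \<exists>u\<in>U. t \<subseteq> u} \<subseteq> T" by (rule Collect_subset)
  ultimately show ?thesis using rels_I[of "{t\<in>T. \<exists>u\<in>U. t \<subseteq> u}" T] by simp
qed

lemma fission_rels:
  assumes "fission \<Omega> S T" "is_relation S s"
  shows "s \<in> rels T"
proof -
  obtain U where U: "U \<subseteq> S" "s = \<Union>U" using assms(2) unfolding is_relation_def by blast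
  have "\<forall>u\<in>U. u \<in> rels T" using U assms(1) unfolding fission_def is_relation_rels by blast
  then show ?thesis using rels_Union U by metis
qed

lemma spf_exists:
  assumes cc: "coherent_configuration \<Omega> S" and B: "B \<subseteq> \<Omega>"
  shows "\<exists>T. smallest_point_fission \<Omega> S B T"
proof -
  let ?F = "{rels T' | T'. fission \<Omega> S T' \<and> (\<forall>b\<in>B. Id_on {b} \<in> T')}"
  define R0 where "R0 = Pow (\<Omega> \<times> \<Omega>) \<inter> \<Inter>?F"
  have f: "finite \<Omega>" using cc_props(1)[OF cc] .
  have "\<forall>R\<in>?F. cclosed \<Omega> R"
  proof
    fix R assume "R \<in> ?F"
    then obtain T' where "R = rels T'" "fission \<Omega> S T'" by blast
    then show "cclosed \<Omega> R" using cc_rels_cclosed unfolding fission_def by blast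
  qed
  then have c: "cclosed \<Omega> R0" unfolding R0_def by (rule cclosed_Int)
  define T where "T = atom R0 ` (\<Omega> \<times> \<Omega>)"
  have ccT: "coherent_configuration \<Omega> T" unfolding T_def using atoms_cc[OF c f] .
  have TR: "T \<subseteq> R0" unfolding T_def using atoms_sub[OF c f] .
  have RT: "R0 \<subseteq> rels T" unfolding T_def using atoms_rels[OF c f] .
  have fis: "fission \<Omega> S T"
    unfolding fission_def
  proof (intro conjI ballI ccT)
    fix s assume s: "s \<in> S"
    have "s \<subseteq> \<Omega> \<times> \<Omega>" using cc_sub[OF cc s] .
    moreover have "s \<in> rels T'" if "fission \<Omega> S T'" for T'
      using that s unfolding fission_def is_relation_rels by blast
    ultimately have "s \<in> R0" unfolding R0_def by blast
    then show "is_relation T s" using RT is_relation_rels by blast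
  qed
  have pts: "Id_on {b} \<in> T" if b: "b \<in> B" for b
  proof -
    have bO: "(b, b) \<in> \<Omega> \<times> \<Omega>" using b B by blast
    have "Id_on {b} \<subseteq> \<Omega> \<times> \<Omega>" using b B by (auto simp: Id_on_def)
    moreover have "Id_on {b} \<in> rels T'" if "\<forall>b\<in>B. Id_on {b} \<in> T'" for T'
      using rels_I[of "{Id_on {b}}" T'] that b by simp
    ultimately have m: "Id_on {b} \<in> R0" unfolding R0_def by blast
    have "atom R0 (b, b) \<subseteq> Id_on {b}" using atom_sub[OF c f _ m] by (simp add: Id_on_def)
    moreover have "(b, b) \<in> atom R0 (b, b)" using atom_in[OF c f bO] .
    ultimately have "atom R0 (b, b) = Id_on {b}" by (auto simp: Id_on_def)
    then show ?thesis unfolding T_def using bO by (metis imageI)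
  qed
  have minm: "\<forall>t\<in>T. is_relation T' t" if "fission \<Omega> S T'" "\<forall>b\<in>B. Id_on {b} \<in> T'" for T'
  proof
    fix t assume "t \<in> T"
    then have "t \<in> R0" using TR by blast
    then have "t \<in> rels T'" unfolding R0_def using that by blast
    then show "is_relation T' t" using is_relation_rels by blast
  qed
  have "smallest_point_fission \<Omega> S B T"
    unfolding smallest_point_fission_def
  proof (intro conjI ballI allI impI)
    show "fission \<Omega> S T" using fis .
  next
    fix b assume "b \<in> B" then show "Id_on {b} \<in> T" using pts by blast
  next
    fix T' t assume h: "fission \<Omega> S T' \<and> (\<forall>b\<in>B. Id_on {b} \<in> T')" and t: "t \<in> T"
    show "is_relation T' t" using minm[of T'] h t by blast
  qed
  then show ?thesis by (rule exI)
qed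



lemma Id_on_single: "Id_on {x} = {(x, x)}"
  by (auto simp: Id_on_def)

lemma Id_single_T:
  assumes cc: "coherent_configuration \<Omega> T" and m: "Id_on {x} \<in> rels T"
  shows "Id_on {x} \<in> T"
proof -
  obtain U where U: "U \<subseteq> T" "Id_on {x} = \<Union>U" using m by (rule rels_E)
  have "(x, x) \<in> Id_on {x}" by (rule Id_onI) simp
  then have "(x, x) \<in> \<Union>U" using U(2) by simp
  then obtain u where u: "u \<in> U" "(x, x) \<in> u" by blast
  have "u \<subseteq> {(x, x)}" using u U(2) Id_on_single by blast
  then have "u = Id_on {x}" using u(2) Id_on_single by blast
  then show ?thesis using u U(1) by blast
qed

lemma complete_pts:
  assumes cc: "coherent_configuration \<Omega> T" and pts: "\<forall>x\<in>\<Omega>. Id_on {x} \<in> T"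
  shows "complete_cc T"
  unfolding complete_cc_def
proof
  fix t assume t: "t \<in> T"
  have "t \<noteq> {}" using t cc_props(2)[OF cc] by blast
  then obtain x y where xy: "(x, y) \<in> t" by auto
  have xO: "x \<in> \<Omega>" and yO: "y \<in> \<Omega>" using cc_sub[OF cc t] xy by auto
  have "q = (x, y)" if q: "q \<in> t" for q
  proof -
    obtain x' y' where q': "q = (x', y')" by (cases q)
    have 1: "card {c. (x, c) \<in> Id_on {x} \<and> (c, y) \<in> t} = card {c. (x', c) \<in> Id_on {x} \<and> (c, y') \<in> t}"
      using cc_props(7)[OF cc pts[rule_format, OF xO] t t xy] q q' by blast
    have "{c. (x, c) \<in> Id_on {x} \<and> (c, y) \<in> t} = {x}" using xy by (auto simp: Id_on_def)
    then have "card {c. (x', c) \<in> Id_on {x} \<and> (c, y') \<in> t} = 1" using 1 by simp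
    then have "{c. (x', c) \<in> Id_on {x} \<and> (c, y') \<in> t} \<noteq> {}" by (metis card.empty zero_neq_one)
    then have ex: "x' = x" by (auto simp: Id_on_def)
    have 2: "card {c. (x, c) \<in> t \<and> (c, y) \<in> Id_on {y}} = card {c. (x', c) \<in> t \<and> (c, y') \<in> Id_on {y}}"
      using cc_props(7)[OF cc t pts[rule_format, OF yO] t xy] q q' by blast
    have "{c. (x, c) \<in> t \<and> (c, y) \<in> Id_on {y}} = {y}" using xy by (auto simp: Id_on_def)
    then have "card {c. (x', c) \<in> t \<and> (c, y') \<in> Id_on {y}} = 1" using 2 by simp
    then have "{c. (x', c) \<in> t \<and> (c, y') \<in> Id_on {y}} \<noteq> {}" by (metis card.empty zero_neq_one)
    then have ey: "y' = y" by (auto simp: Id_on_def)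
    show ?thesis using q' ex ey by simp
  qed
  then have "t = {(x, y)}" using xy by blast
  then show "\<exists>p. t = {p}" by (rule exI)
qed

lemma card_single_cond: "card {z. P \<and> z = p} = (if P then 1 else 0)"
  by auto

lemma pointcell:
  assumes c: "cclosed \<Omega> R" and p: "p \<in> \<Omega>" and ip: "Id_on {p} \<in> R" and r: "r \<in> R"
  shows "Id_on {y. (p, y) \<in> r} \<in> R"
proof -
  let ?N = "{y. (p, y) \<in> r}"
  have rO: "r \<subseteq> \<Omega> \<times> \<Omega>" using r cclosed_props(1)[OF c] by blast
  have NO: "?N \<subseteq> \<Omega>" using rO by blast
  define X1 where "X1 = compk \<Omega> (converse r) (Id_on {p}) 1"
  have X1R: "X1 \<in> R" unfolding X1_def using cclosed_props(8)[OF c cclosed_props(9)[OF c r] ip] .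
  have X1: "X1 = ?N \<times> {p}"
  proof (rule set_eqI)
    fix q :: "'a \<times> 'a"
    obtain x y where q: "q = (x, y)" by (cases q)
    have "{z. (x, z) \<in> converse r \<and> (z, y) \<in> Id_on {p}} = {z. ((p, x) \<in> r \<and> y = p) \<and> z = p}"
      by (auto simp: Id_on_def)
    then have "card {z. (x, z) \<in> converse r \<and> (z, y) \<in> Id_on {p}} = (if (p, x) \<in> r \<and> y = p then 1 else 0)"
      using card_single_cond by simp
    then show "q \<in> X1 \<longleftrightarrow> q \<in> ?N \<times> {p}" unfolding X1_def compk_def q using NO p by auto
  qed
  define X2 where "X2 = compk \<Omega> X1 (converse X1) 1"
  have X2R: "X2 \<in> R" unfolding X2_def using cclosed_props(8)[OF c X1R cclosed_props(9)[OF c X1R]] .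
  have X2: "X2 = ?N \<times> ?N"
  proof (rule set_eqI)
    fix q :: "'a \<times> 'a"
    obtain x y where q: "q = (x, y)" by (cases q)
    have "{z. (x, z) \<in> X1 \<and> (z, y) \<in> converse X1} = {z. (x \<in> ?N \<and> y \<in> ?N) \<and> z = p}"
      unfolding X1 by auto
    then have "card {z. (x, z) \<in> X1 \<and> (z, y) \<in> converse X1} = (if x \<in> ?N \<and> y \<in> ?N then 1 else 0)"
      using card_single_cond by simp
    then show "q \<in> X2 \<longleftrightarrow> q \<in> ?N \<times> ?N" unfolding X2_def compk_def q using NO by auto
  qed
  have "X2 \<inter> Id_on \<Omega> \<in> R" using cclosed_props(6)[OF c X2R cclosed_props(4)[OF c]] .
  moreover have "X2 \<inter> Id_on \<Omega> = Id_on ?N" unfolding X2 using NO by (auto simp: Id_on_def)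
  ultimately show ?thesis by simp
qed



lemma propagate:
  assumes cc: "coherent_configuration \<Omega> S" and rel: "is_relation S s"
    and con: "connected_rel \<Omega> s"
    and hyp: "\<forall>a\<in>\<Omega>. \<forall>T. smallest_point_fission \<Omega> S {a} T \<longrightarrow>
           semiregular (neighbourhood a s) (restriction T (neighbourhood a s))"
    and fis: "fission \<Omega> S T'" and ab: "(a, b) \<in> s"
    and pa: "Id_on {a} \<in> T'" and pb: "Id_on {b} \<in> T'"
  shows "\<forall>x\<in>\<Omega>. Id_on {x} \<in> T'"
proof -
  have ccT: "coherent_configuration \<Omega> T'" using fis unfolding fission_def by blast
  have c: "cclosed \<Omega> (rels T')" using cc_rels_cclosed[OF ccT] .
  have sR: "s \<in> rels T'" using fission_rels[OF fis rel] .
  have sO: "s \<subseteq> \<Omega> \<times> \<Omega>" using sR cclosed_props(1)[OF c] by blast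
  have eq: "s = converse s" using con unfolding connected_rel_def by (rule conjunct1)
  have sym: "(y, x) \<in> s" if "(x, y) \<in> s" for x y
  proof -
    have "(y, x) \<in> converse s" using that by simp
    then show ?thesis using equalityD2[OF eq] by blast
  qed
  have TR: "t \<in> rels T'" if "t \<in> T'" for t
    using rels_I[of "{t}" T'] that by simp
  have step: "Id_on {e} \<in> T'"
    if g: "Id_on {g} \<in> T'" and d: "Id_on {d} \<in> T'" and gd: "(g, d) \<in> s" and ge: "(g, e) \<in> s" for g d e
  proof -
    have gO: "g \<in> \<Omega>" and dO: "d \<in> \<Omega>" and eO: "e \<in> \<Omega>" using sO gd ge by auto
    obtain X where X: "smallest_point_fission \<Omega> S {g} X" using spf_exists[OF cc, of "{g}"] gO by blast
    let ?N = "neighbourhood g s"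
    have sr: "semiregular ?N (restriction X ?N)" using hyp gO X by blast
    have ccX: "coherent_configuration \<Omega> X" using X unfolding smallest_point_fission_def fission_def by blast
    have XR: "t \<in> rels T'" if "t \<in> X" for t
    proof -
      have "\<forall>t\<in>X. is_relation T' t" using X fis g unfolding smallest_point_fission_def by blast
      then show ?thesis using that is_relation_rels by blast
    qed
    have "(d, e) \<in> \<Union>X" using cc_props(3)[OF ccX] dO eO by blast
    then obtain t where t: "t \<in> X" "(d, e) \<in> t" by blast
    have dN: "d \<in> ?N" and eN: "e \<in> ?N" using gd ge unfolding neighbourhood_def by auto
    have "t \<inter> (?N \<times> ?N) \<in> restriction X ?N"
      unfolding restriction_def using t dN eN by blast
    then have cd: "card {y. (d, y) \<in> t \<inter> (?N \<times> ?N)} \<le> 1"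
      using sr dN unfolding semiregular_def by blast
    have "{y. (d, y) \<in> t \<inter> (?N \<times> ?N)} \<subseteq> \<Omega>" using cc_sub[OF ccX t(1)] by blast
    then have fin: "finite {y. (d, y) \<in> t \<inter> (?N \<times> ?N)}"
      using finite_subset cc_props(1)[OF cc] by auto
    have one: "y = e" if "(d, y) \<in> t" "y \<in> ?N" for y
    proof -
      have "y \<in> {y. (d, y) \<in> t \<inter> (?N \<times> ?N)}" "e \<in> {y. (d, y) \<in> t \<inter> (?N \<times> ?N)}"
        using that t dN eN by auto
      then show ?thesis using cd card_le_Suc0_iff_eq[OF fin] by simp
    qed
    have I1: "Id_on {y. (d, y) \<in> t} \<in> rels T'" using pointcell[OF c dO TR[OF d] XR[OF t(1)]] .
    have I2: "Id_on {y. (g, y) \<in> s} \<in> rels T'" using pointcell[OF c gO TR[OF g] sR] .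
    have "Id_on {y. (d, y) \<in> t} \<inter> Id_on {y. (g, y) \<in> s} \<in> rels T'"
      using cclosed_props(6)[OF c I1 I2] .
    moreover have "Id_on {y. (d, y) \<in> t} \<inter> Id_on {y. (g, y) \<in> s} = Id_on {e}"
    proof
      show "Id_on {y. (d, y) \<in> t} \<inter> Id_on {y. (g, y) \<in> s} \<subseteq> Id_on {e}"
        using one unfolding neighbourhood_def by (auto simp: Id_on_def)
      show "Id_on {e} \<subseteq> Id_on {y. (d, y) \<in> t} \<inter> Id_on {y. (g, y) \<in> s}"
        using t(2) ge by (auto simp: Id_on_def)
    qed
    ultimately have "Id_on {e} \<in> rels T'" by simp
    then show ?thesis using Id_single_T[OF ccT] by blast
  qed
  define Q where "Q x \<longleftrightarrow> Id_on {x} \<in> T' \<and> (\<forall>w. (x, w) \<in> s \<longrightarrow> Id_on {w} \<in> T')" for x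
  have Qa: "Q a" unfolding Q_def using pa step[OF pa pb ab] by blast
  have Qstep: "Q y" if "Q x" "(x, y) \<in> s" for x y
  proof -
    have y: "Id_on {y} \<in> T'" using that unfolding Q_def by blast
    have x: "Id_on {x} \<in> T'" using that unfolding Q_def by blast
    show ?thesis unfolding Q_def using y step[OF y x sym[OF that(2)]] by blast
  qed
  have Qt: "Q y" if "(a, y) \<in> s\<^sup>+" for y
    using that
  proof (induction rule: trancl_induct)
    case (base y) then show ?case using Qstep Qa by blast
  next
    case (step y z) then show ?case using Qstep by blast
  qed
  show ?thesis
  proof
    fix x assume x: "x \<in> \<Omega>"
    show "Id_on {x} \<in> T'"
    proof (cases "x = a")
      case True then show ?thesis using pa by simp
    next
      case False
      have aO: "a \<in> \<Omega>" using sO ab by blast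
      have conn: "\<forall>x\<in>\<Omega>. \<forall>y\<in>\<Omega>. x \<noteq> y \<longrightarrow> (x, y) \<in> s\<^sup>+"
        using con unfolding connected_rel_def by (rule conjunct2)
      have "(a, x) \<in> s\<^sup>+" using conn[rule_format, OF aO x] False by simp
      then show ?thesis using Qt unfolding Q_def by blast
    qed
  qed
qed

lemma trancl_ne:
  assumes "(x, y) \<in> s\<^sup>+" "x \<noteq> y"
  shows "\<exists>u v. (u, v) \<in> s \<and> u \<noteq> v"
  using assms
proof (induction rule: trancl_induct)
  case (base y) then show ?case by blast
next
  case (step y z) then show ?case by (cases "y = z") auto
qed

theorem theorem3p3:
  fixes \<Omega> :: "'a set" and S :: "('a \<times> 'a) set set" and s :: "('a \<times> 'a) set"
  assumes "coherent_configuration \<Omega> S"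
    and "is_relation S s"
    and "connected_rel \<Omega> s"
    and "\<forall>a\<in>\<Omega>. \<forall>T. smallest_point_fission \<Omega> S {a} T \<longrightarrow>
           semiregular (neighbourhood a s) (restriction T (neighbourhood a s))"
  shows "(\<forall>a b. (a, b) \<in> s \<and> a \<noteq> b \<longrightarrow> is_base \<Omega> S {a, b}) \<and> base_number \<Omega> S \<le> 2"
proof -
  note cc = assms(1)
  have sO: "s \<subseteq> \<Omega> \<times> \<Omega>"
  proof -
    obtain U where U: "U \<subseteq> S" "s = \<Union>U" using assms(2) unfolding is_relation_def by blast
    then show ?thesis using cc_sub[OF cc] by blast
  qed
  have base: "is_base \<Omega> S {a, b}" if ab: "(a, b) \<in> s" for a b
  proof -
    have B: "{a, b} \<subseteq> \<Omega>" using ab sO by blast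
    obtain T0 where T0: "smallest_point_fission \<Omega> S {a, b} T0" using spf_exists[OF cc B] by blast
    have fis: "fission \<Omega> S T0" and pa: "Id_on {a} \<in> T0" and pb: "Id_on {b} \<in> T0"
      using T0 unfolding smallest_point_fission_def by auto
    have "\<forall>x\<in>\<Omega>. Id_on {x} \<in> T0" using propagate[OF assms fis ab pa pb] .
    moreover have ccT: "coherent_configuration \<Omega> T0" using fis unfolding fission_def by blast
    ultimately have "complete_cc T0" using complete_pts by blast
    then show ?thesis unfolding is_base_def using B T0 by blast
  qed
  have bn: "base_number \<Omega> S \<le> 2"
  proof (cases "\<exists>a b. (a, b) \<in> s \<and> a \<noteq> b")
    case True
    then obtain a b where ab: "(a, b) \<in> s" "a \<noteq> b" by blast
    have "is_base \<Omega> S {a, b} \<and> card {a, b} = 2" using base[OF ab(1)] ab(2) by simp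
    then have "\<exists>B. is_base \<Omega> S B \<and> card B = 2" by blast
    then show ?thesis unfolding base_number_def by (rule Least_le)
  next
    case False
    have sub: "\<forall>x\<in>\<Omega>. \<forall>y\<in>\<Omega>. x = y"
    proof (intro ballI)
      fix x y assume "x \<in> \<Omega>" "y \<in> \<Omega>"
      show "x = y"
      proof (rule ccontr)
        assume ne: "x \<noteq> y"
        have conn: "\<forall>x\<in>\<Omega>. \<forall>y\<in>\<Omega>. x \<noteq> y \<longrightarrow> (x, y) \<in> s\<^sup>+"
          using assms(3) unfolding connected_rel_def by (rule conjunct2)
        have "(x, y) \<in> s\<^sup>+" using conn[rule_format, OF \<open>x \<in> \<Omega>\<close> \<open>y \<in> \<Omega>\<close>] ne by simp
        then obtain u v where "(u, v) \<in> s" "u \<noteq> v" using trancl_ne[OF _ ne] by blast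
        then show False using False by blast
      qed
    qed
    have f: "finite \<Omega>" using cc_props(1)[OF cc] .
    have c1: "card \<Omega> \<le> 2" using card_le_Suc0_iff_eq[OF f] sub by simp
    obtain T0 where T0: "smallest_point_fission \<Omega> S \<Omega> T0" using spf_exists[OF cc] by blast
    have "\<forall>x\<in>\<Omega>. Id_on {x} \<in> T0" and ccT: "coherent_configuration \<Omega> T0"
      using T0 unfolding smallest_point_fission_def fission_def by auto
    then have "complete_cc T0" using complete_pts by blast
    then have "is_base \<Omega> S \<Omega>" unfolding is_base_def using T0 by blast
    then have "base_number \<Omega> S \<le> card \<Omega>" unfolding base_number_def by (metis (mono_tags) Least_le)
    then show ?thesis using c1 by linarith
  qed
  show ?thesis using base bn by blast
qed

end
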